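(* Let $K\subset\mathbb{R}^n$ be a nonempty compact convex set and let $\{\mathbb{A}_m\}_{m\in\mathbb{N}}$ be a sequence of isometries of $\mathbb{R}^n$. Suppose that the sequence \[K_m=\frac{1}{m}\sum_{j=1}^m \mathbb{A}_j K\] converges in the Hausdorff metric. Then for every nonempty compact set $C\subset\mathbb{R}^n$ with $\mathrm{conv}(C)=K$, the sequence \[C_m=\frac{1}{m}\sum_{j=1}^m \mathbb{A}_j C\] also converges in the Hausdorff metric, and its limit coincides with the limit of $\{K_m\}$.
   Context: For sets $X,Y\subset\mathbb{R}^n$ and $t\ge 0$, $X+Y=\{x+y:x\in X,y\in Y\}$ is the Minkowski sum and $tX=\{tx:x\in X\}$; $\sum_{j=1}^m X_j$ denotes iterated Minkowski sum. $\mathrm{conv}(C)$ is the convex hull of $C$. The Hausdorff distance between sets $A,B$ is $d_H(A,B)=\max\{\sup_{x\in B}d(x,A),\sup_{x\in A}d(x,B)\}$. *)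

theory Defs
  imports "HOL-Analysis.Analysis"
begin

text \<open>Hausdorff distance between sets, as in the paper.
  (Used only for nonempty compact sets, where it is finite.)\<close>
definition hausdorff_dist :: "'a::metric_space set \<Rightarrow> 'a set \<Rightarrow> real" where
  "hausdorff_dist A B = max (SUP x\<in>B. infdist x A) (SUP x\<in>A. infdist x B)"

definition isometry :: "('a::metric_space \<Rightarrow> 'a) \<Rightarrow> bool" where
  "isometry f \<longleftrightarrow> (\<forall>x y. dist (f x) (f y) = dist x y)"

definition mink_avg :: "(nat \<Rightarrow> 'a::real_vector \<Rightarrow> 'a) \<Rightarrow> 'a set \<Rightarrow> nat \<Rightarrow> 'a set" where
  "mink_avg A X m = (\<lambda>x. (1 / real m) *\<^sub>R x) ` (\<Sum>j\<in>{1..m}. A j ` X)"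

definition hausdorff_converges_to :: "(nat \<Rightarrow> 'a::metric_space set) \<Rightarrow> 'a set \<Rightarrow> bool" where
  "hausdorff_converges_to S L \<longleftrightarrow>
     L \<noteq> {} \<and> compact L \<and> (\<lambda>m. hausdorff_dist (S m) L) \<longlonglongrightarrow> 0"

end

theory Submission
  imports Defs "HOL-Real_Asymp.Real_Asymp"
begin

lemma iso_cont:
  assumes "isometry (f :: 'a::metric_space \<Rightarrow> 'a)"
  shows "continuous_on S f"
  unfolding continuous_on_iff
proof (intro ballI allI impI)
  fix x and e :: real assume "0 < e"
  then show "\<exists>d>0. \<forall>x'\<in>S. dist x' x < d \<longrightarrow> dist (f x') (f x) < e"
    using assms by (intro exI[of _ e]) (auto simp: isometry_def)
qed

lemma compact_setsum:
  fixes S :: "nat \<Rightarrow> 'a::real_normed_vector set"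
  assumes "finite I" "\<And>i. i \<in> I \<Longrightarrow> compact (S i)"
  shows "compact (sum S I)"
  using assms
proof (induction I rule: finite_induct)
  case empty
  then show ?case by simp
next
  case (insert x F)
  have "sum S (insert x F) = S x + sum S F" using insert.hyps by simp
  also have "\<dots> = {a + b | a b. a \<in> S x \<and> b \<in> sum S F}"
    unfolding set_plus_def by auto
  finally have eq: "sum S (insert x F) = {a + b | a b. a \<in> S x \<and> b \<in> sum S F}" .
  have c1: "compact (S x)" using insert.prems by simp
  have c2: "compact (sum S F)" using insert.IH insert.prems by simp
  show ?case unfolding eq by (rule compact_sums[OF c1 c2])
qed

lemma mink_compact:
  fixes X :: "'a::real_normed_vector set"
  assumes "compact X" "\<And>j. isometry (A j)"
  shows "compact (mink_avg A X m)"
  unfolding mink_avg_def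
  apply (rule compact_continuous_image)
   apply (intro continuous_intros)
  apply (rule compact_setsum)
   apply simp
  using assms compact_continuous_image iso_cont by metis

lemma mink_nonempty:
  assumes "X \<noteq> {}"
  shows "mink_avg A X m \<noteq> {}"
proof -
  obtain x where "x \<in> X" using assms by auto
  then have "(\<Sum>j\<in>{1..m}. A j x) \<in> (\<Sum>j\<in>{1..m}. A j ` X)"
    unfolding set_sum_alt[OF finite_atLeastAtMost] by auto
  then show ?thesis unfolding mink_avg_def by auto
qed

lemma mink_mono:
  assumes "C \<subseteq> K"
  shows "mink_avg A C m \<subseteq> mink_avg A K m"
  unfolding mink_avg_def set_sum_alt[OF finite_atLeastAtMost]
  using assms by (intro image_mono) blast

lemma choose_pt:
  fixes f :: "real ^ 'n \<Rightarrow> real ^ 'n"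
  assumes "isometry f" "k \<in> convex hull C"
  shows "\<exists>c\<in>C. inner e (f c - f k) \<le> 0"
proof (rule ccontr)
  assume H: "\<not> ?thesis"
  define g where "g x = f x - f 0" for x
  have lg: "linear g"
    by (rule isometry_linear) (use assms(1) in \<open>auto simp: g_def isometry_def dist_norm\<close>)
  define h where "h x = inner e (g x)" for x
  have lh: "linear h" unfolding h_def
    using linear_compose[OF lg, of "inner e"] bounded_linear_inner_right[of e]
    by (simp add: o_def bounded_linear.linear)
  have fg: "f c - f k = g c - g k" for c by (simp add: g_def)
  have "C \<subseteq> h -` {h k<..}"
    using H by (auto simp: h_def fg inner_diff_right)
  moreover have "convex (h -` {h k<..})"
    by (rule convex_linear_vimage[OF lh]) simp
  ultimately have "convex hull C \<subseteq> h -` {h k<..}" by (rule hull_minimal)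
  then show False using assms(2) by auto
qed

lemma greedy:
  fixes A :: "nat \<Rightarrow> real ^ 'n \<Rightarrow> real ^ 'n"
  assumes iso: "\<And>j. isometry (A j)" and CK: "C \<subseteq> K" and Kh: "K = convex hull C"
    and Cne: "C \<noteq> {}" and D: "\<And>x y. x \<in> K \<Longrightarrow> y \<in> K \<Longrightarrow> dist x y \<le> D"
    and D0: "0 \<le> D"
  shows "\<forall>k. (\<forall>j. k j \<in> K) \<longrightarrow> (\<exists>c. (\<forall>j. c j \<in> C) \<and>
     (norm (\<Sum>j\<in>{1..n}. A j (c j) - A j (k j)))^2 \<le> real n * D^2)"
proof (induction n)
  case 0
  then show ?case using Cne by auto
next
  case (Suc n)
  show ?case
  proof (intro allI impI)
    fix k :: "nat \<Rightarrow> real ^ 'n" assume k: "\<forall>j. k j \<in> K"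
    then obtain c where c: "\<forall>j. c j \<in> C"
      and cb: "(norm (\<Sum>j\<in>{1..n}. A j (c j) - A j (k j)))^2 \<le> real n * D^2"
      using Suc.IH by blast
    define e where "e = (\<Sum>j\<in>{1..n}. A j (c j) - A j (k j))"
    obtain x where x: "x \<in> C" and xe: "inner e (A (Suc n) x - A (Suc n) (k (Suc n))) \<le> 0"
      using choose_pt[OF iso, of "k (Suc n)" C e] k Kh by auto
    define c' where "c' = c(Suc n := x)"
    define v where "v = A (Suc n) x - A (Suc n) (k (Suc n))"
    have "(\<Sum>j\<in>{1..n}. A j (c' j) - A j (k j)) = e"
      unfolding e_def c'_def by (intro sum.cong) auto
    then have sum_eq: "(\<Sum>j\<in>{1..Suc n}. A j (c' j) - A j (k j)) = e + v"
      by (simp add: v_def c'_def)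
    have nv: "norm v \<le> D"
      using iso[of "Suc n"] D[of x "k (Suc n)"] x CK k
      by (auto simp: v_def isometry_def dist_norm)
    have nv2: "(norm v)^2 \<le> D^2" using nv by (simp add: power_mono)
    have "(norm (e + v))^2 = (norm e)^2 + 2 * inner e v + (norm v)^2"
      by (simp add: power2_norm_eq_inner inner_add inner_commute)
    also have "\<dots> \<le> real n * D^2 + D^2"
      using cb xe nv2 by (simp add: e_def v_def)
    finally have "(norm (e + v))^2 \<le> real (Suc n) * D^2" by (simp add: algebra_simps)
    moreover have "\<forall>j. c' j \<in> C" using c x by (simp add: c'_def)
    ultimately show "\<exists>c. (\<forall>j. c j \<in> C) \<and>
      (norm (\<Sum>j\<in>{1..Suc n}. A j (c j) - A j (k j)))^2 \<le> real (Suc n) * D^2"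
      using sum_eq by metis
  qed
qed

lemma hd_le:
  fixes S T L :: "'a::metric_space set"
  assumes "S \<noteq> {}" "T \<noteq> {}" "L \<noteq> {}" "bounded T" "bounded L" "S \<subseteq> T"
    and close: "\<And>y. y \<in> T \<Longrightarrow> \<exists>z\<in>S. dist y z \<le> e"
  shows "hausdorff_dist S L \<le> hausdorff_dist T L + e"
proof -
  have a: "infdist x S \<le> infdist x T + e" for x
  proof -
    have "infdist x S - e \<le> infdist x T"
      unfolding infdist_def[of x T] using assms(2)
    proof (simp, intro cINF_greatest)
      fix y assume y: "y \<in> T"
      then obtain z where z: "z \<in> S" "dist y z \<le> e" using close by blast
      have "infdist x S \<le> dist x z" by (rule infdist_le[OF z(1)])
      also have "\<dots> \<le> dist x y + dist y z" by (rule dist_triangle)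
      finally show "infdist x S - e \<le> dist x y" using z by simp
    qed (use assms(2) in auto)
    then show ?thesis by simp
  qed
  have bdd: "bdd_above ((\<lambda>x. infdist x Y) ` Z)" if Yne: "Y \<noteq> {}" and Zb: "bounded Z" for Y Z :: "'a set"
  proof -
    obtain t where t: "t \<in> Y" using Yne by auto
    obtain a r where ar: "\<forall>x\<in>Z. dist a x \<le> r" using Zb unfolding bounded_def by auto
    have "infdist x Y \<le> r + dist a t" if "x \<in> Z" for x
    proof -
      have "infdist x Y \<le> dist x t" by (rule infdist_le[OF t])
      also have "\<dots> \<le> dist x a + dist a t" by (rule dist_triangle)
      finally have fin: "infdist x Y \<le> dist x a + dist a t" .
      have "dist x a \<le> r" using ar that dist_commute by metis
      then show ?thesis using fin by linarith
    qed
    then show ?thesis by (rule bdd_aboveI2[of Z "\<lambda>x. infdist x Y" "r + dist a t"]) auto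
  qed
  have d: "(SUP x\<in>L. infdist x S) \<le> (SUP x\<in>L. infdist x T) + e"
  proof (rule cSUP_least[OF assms(3)])
    fix x assume "x \<in> L"
    then have "infdist x T \<le> (SUP x\<in>L. infdist x T)"
      using bdd[OF assms(2) assms(5)] by (intro cSUP_upper) auto
    then show "infdist x S \<le> (SUP x\<in>L. infdist x T) + e" using a[of x] by simp
  qed
  have e: "(SUP x\<in>S. infdist x L) \<le> (SUP x\<in>T. infdist x L)"
    by (rule cSUP_subset_mono[OF assms(1) bdd[OF assms(3) assms(4)]]) (use assms(6) in auto)
  obtain y0 where "y0 \<in> T" using assms(2) by auto
  then obtain z0 where "dist y0 z0 \<le> e" using close by blast
  then have e0: "0 \<le> e" using zero_le_dist[of y0 z0] by linarith
  have m1: "(SUP x\<in>L. infdist x T) \<le> max (SUP x\<in>L. infdist x T) (SUP x\<in>T. infdist x L)" by simp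
  have m2: "(SUP x\<in>T. infdist x L) \<le> max (SUP x\<in>L. infdist x T) (SUP x\<in>T. infdist x L)" by simp
  show ?thesis unfolding hausdorff_dist_def
  proof (rule max.boundedI)
    show "(SUP x\<in>L. infdist x S) \<le> max (SUP x\<in>L. infdist x T) (SUP x\<in>T. infdist x L) + e"
      by (rule order.trans[OF d add_right_mono[OF m1]])
    show "(SUP x\<in>S. infdist x L) \<le> max (SUP x\<in>L. infdist x T) (SUP x\<in>T. infdist x L) + e"
      by (rule order.trans[OF order.trans[OF e m2]]) (simp add: e0)
  qed
qed

lemma hd_nonneg:
  fixes S L :: "'a::metric_space set"
  assumes "S \<noteq> {}" "L \<noteq> {}"  "bounded L"
  shows "0 \<le> hausdorff_dist S L"
proof -
  obtain t where t: "t \<in> S" using assms by auto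
  obtain a r where ar: "\<forall>x\<in>L. dist a x \<le> r" using assms(3) unfolding bounded_def by auto
  have "infdist x S \<le> r + dist a t" if "x \<in> L" for x
  proof -
    have "infdist x S \<le> dist x t" by (rule infdist_le[OF t])
    also have "\<dots> \<le> dist x a + dist a t" by (rule dist_triangle)
    finally have fin: "infdist x S \<le> dist x a + dist a t" .
    have "dist x a \<le> r" using ar that dist_commute by metis
    then show ?thesis using fin by linarith
  qed
  then have "bdd_above ((\<lambda>x. infdist x S) ` L)" by (rule bdd_aboveI2[of L "\<lambda>x. infdist x S" "r + dist a t"]) auto
  moreover obtain l where "l \<in> L" using assms by auto
  ultimately have "infdist l S \<le> (SUP x\<in>L. infdist x S)" by (intro cSUP_upper)
  then have "0 \<le> (SUP x\<in>L. infdist x S)" using infdist_nonneg[of l S] by linarith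
  then show ?thesis unfolding hausdorff_dist_def by simp
qed

theorem theorem2:
  fixes K :: "(real ^ 'n) set" and A :: "nat \<Rightarrow> real ^ 'n \<Rightarrow> real ^ 'n"
  assumes "K \<noteq> {}" and "compact K" and "convex K"
    and "\<And>m. isometry (A m)"
    and "hausdorff_converges_to (mink_avg A K) L"
  shows "\<forall>C. C \<noteq> {} \<and> compact C \<and> convex hull C = K \<longrightarrow>
           hausdorff_converges_to (mink_avg A C) L"
proof (intro allI impI)
  fix C :: "(real ^ 'n) set"
  assume asm: "C \<noteq> {} \<and> compact C \<and> convex hull C = K"
  have Cne: "C \<noteq> {}" and Cc: "compact C" and Kh: "K = convex hull C" using asm by auto
  have CK: "C \<subseteq> K" unfolding Kh by (rule hull_subset)
  have Lne: "L \<noteq> {}" and Lc: "compact L"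
    and lim: "(\<lambda>m. hausdorff_dist (mink_avg A K m) L) \<longlonglongrightarrow> 0"
    using assms(5) unfolding hausdorff_converges_to_def by auto
  obtain D0 where D00: "\<forall>x\<in>K. \<forall>y\<in>K. dist x y \<le> D0"
    using compact_imp_bounded[OF assms(2)] unfolding bounded_two_points by blast
  have D0: "\<And>x y. x \<in> K \<Longrightarrow> y \<in> K \<Longrightarrow> dist x y \<le> D0"
    using D00 by blast
  define D where "D = max D0 0"
  have D: "\<And>x y. x \<in> K \<Longrightarrow> y \<in> K \<Longrightarrow> dist x y \<le> D"
    using D0 unfolding D_def by (meson max.coboundedI1 order_trans)
  have Dp: "0 \<le> D" unfolding D_def by simp
  have close: "\<exists>z\<in>mink_avg A C m. dist y z \<le> D / sqrt (real m)"
    if m: "m \<ge> 1" and y: "y \<in> mink_avg A K m" for m y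
  proof -
    obtain s where s: "\<forall>j\<in>{1..m}. s j \<in> A j ` K"
      and ys: "y = (1 / real m) *\<^sub>R (\<Sum>j\<in>{1..m}. s j)"
      using y unfolding mink_avg_def set_sum_alt[OF finite_atLeastAtMost] by auto
    obtain k0 where k0: "k0 \<in> K" using assms(1) by auto
    define k where "k j = (if j \<in> {1..m} then (SOME x. x \<in> K \<and> s j = A j x) else k0)" for j
    have kK: "\<forall>j. k j \<in> K" and ks: "\<forall>j\<in>{1..m}. s j = A j (k j)"
    proof -
      have "k j \<in> K \<and> s j = A j (k j)" if j: "j \<in> {1..m}" for j
      proof -
        have ex: "\<exists>x. x \<in> K \<and> s j = A j x" using s j by blast
        show ?thesis unfolding k_def using someI_ex[OF ex] j by simp
      qed
      note H = this
      show "\<forall>j. k j \<in> K"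
      proof
        fix j
        show "k j \<in> K"
        proof (cases "j \<in> {1..m}")
          case True
          then show ?thesis using H by blast
        next
          case False
          then have "k j = k0" unfolding k_def by (rule if_not_P)
          then show ?thesis using k0 by simp
        qed
      qed
      show "\<forall>j\<in>{1..m}. s j = A j (k j)" using H by blast
    qed
    note G = greedy[where A=A and C=C and K=K and D=D and n=m, OF assms(4) CK Kh Cne D Dp]
    obtain c where c: "\<forall>j. c j \<in> C"
      and cb: "(norm (\<Sum>j\<in>{1..m}. A j (c j) - A j (k j)))^2 \<le> real m * D^2"
      using mp[OF spec[OF G, of k] kK] by blast
    define z where "z = (1 / real m) *\<^sub>R (\<Sum>j\<in>{1..m}. A j (c j))"
    have "(\<Sum>j\<in>{1..m}. A j (c j)) \<in> {sum s {1..m} |s. \<forall>i\<in>{1..m}. s i \<in> A i ` C}"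
      by (intro CollectI exI[of _ "\<lambda>j. A j (c j)"]) (use c in blast)
    then have zin: "z \<in> mink_avg A C m"
      unfolding mink_avg_def set_sum_alt[OF finite_atLeastAtMost] z_def by (rule imageI)
    have ysum: "(\<Sum>j\<in>{1..m}. s j) = (\<Sum>j\<in>{1..m}. A j (k j))"
      using ks by (intro sum.cong) auto
    define w where "w = (\<Sum>j\<in>{1..m}. A j (c j) - A j (k j))"
    have "y - z = - ((1 / real m) *\<^sub>R w)"
      unfolding ys z_def ysum w_def by (simp add: sum_subtractf scaleR_diff_right)
    then have deq: "dist y z = (1 / real m) * norm w"
      by (simp add: dist_norm)
    have nb: "norm w \<le> sqrt (real m) * D"
    proof -
      have "norm w \<le> sqrt (real m * D^2)"
        using cb real_le_rsqrt unfolding w_def by blast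
      also have "\<dots> = sqrt (real m) * D" using Dp by (simp add: real_sqrt_mult)
      finally show ?thesis .
    qed
    have "dist y z \<le> (1 / real m) * (sqrt (real m) * D)"
      unfolding deq by (rule mult_left_mono[OF nb]) simp
    also have "\<dots> = D / sqrt (real m)"
    proof -
      have sq: "sqrt (real m) * sqrt (real m) = real m" by simp
      have pos: "sqrt (real m) > 0" using m by simp
      show ?thesis using sq pos by (simp add: field_simps)
    qed
    finally show ?thesis using zin by blast
  qed
  have bnd: "hausdorff_dist (mink_avg A C m) L \<le> hausdorff_dist (mink_avg A K m) L + D / sqrt (real m)"
    if "m \<ge> 1" for m
    by (rule hd_le[OF mink_nonempty[OF Cne] mink_nonempty[OF assms(1)] Lne
        compact_imp_bounded[OF mink_compact[OF assms(2) assms(4)]] compact_imp_bounded[OF Lc]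
        mink_mono[OF CK] close[OF that]])
  have nn: "0 \<le> hausdorff_dist (mink_avg A C m) L" for m
    by (rule hd_nonneg[OF mink_nonempty[OF Cne] Lne compact_imp_bounded[OF Lc]])
  have t1: "(\<lambda>m. D / sqrt (real m)) \<longlonglongrightarrow> 0" by real_asymp
  have t2: "(\<lambda>m. hausdorff_dist (mink_avg A K m) L + D / sqrt (real m)) \<longlonglongrightarrow> 0 + 0"
    by (rule tendsto_add[OF lim t1])
  have ev1: "eventually (\<lambda>m. 0 \<le> hausdorff_dist (mink_avg A C m) L) sequentially"
    using nn by simp
  have ev2: "eventually (\<lambda>m. hausdorff_dist (mink_avg A C m) L
      \<le> hausdorff_dist (mink_avg A K m) L + D / sqrt (real m)) sequentially"
    unfolding eventually_sequentially using bnd by blast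
  have "(\<lambda>m. hausdorff_dist (mink_avg A C m) L) \<longlonglongrightarrow> 0"
    using tendsto_sandwich[OF ev1 ev2 tendsto_const] t2 by simp
  then show "hausdorff_converges_to (mink_avg A C) L"
    unfolding hausdorff_converges_to_def using Lne Lc by auto
qed

end
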